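(* Let $E$ be a graph satisfying Condition (K). Let $v\in E^0$ support at least two distinct return paths. Then the Cuntz Splice $E_C^v$ satisfies Condition (K).
   Context: A graph $E=(E^0,E^1,r,s)$ consists of countable sets $E^0$ (vertices) and $E^1$ (edges) and maps $r,s\colon E^1\to E^0$ (range and source). A path is a finite sequence $\mu=e_1\cdots e_n$ ($n\ge1$) of edges with $r(e_i)=s(e_{i+1})$; set $s(\mu)=s(e_1)$, $r(\mu)=r(e_n)$. A return path is a path $\mu=e_1\cdots e_n$ with $s(\mu)=r(\mu)$ and $r(e_i)\neq r(\mu)$ for $i<n$; a vertex $w$ supports $\mu$ if $s(\mu)=w$. $E$ satisfies Condition (K) if no vertex supports precisely one return path. The Cuntz Splice $E_C^v$ of $E$ at a vertex $v$ supporting at least two distinct return paths is the graph with vertex set $E^0\sqcup\{u_1,u_2\}$ and edge set $E^1\sqcup\{f_1,f_2,h_1,h_2,k_1,k_2\}$, where old edges keep their range and source, and $f_1\colon v\to u_1$, $f_2\colon u_1\to v$, $h_1\colon u_1\to u_1$, $h_2\colon u_1\to u_2$, $k_1\colon u_2\to u_1$, $k_2\colon u_2\to u_2$ (notation $e\colon a\to b$ means $s(e)=a$, $r(e)=b$). *)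

theory Defs
  imports "HOL-Library.Countable_Set"
begin

record ('v, 'e) dgraph =
  verts :: "'v set"
  edges :: "'e set"
  rng   :: "'e \<Rightarrow> 'v"
  src   :: "'e \<Rightarrow> 'v"

definition is_graph :: "('v, 'e) dgraph \<Rightarrow> bool" where
  "is_graph E \<longleftrightarrow> countable (verts E) \<and> countable (edges E)
     \<and> (\<forall>e \<in> edges E. rng E e \<in> verts E \<and> src E e \<in> verts E)"

definition is_path :: "('v, 'e) dgraph \<Rightarrow> 'e list \<Rightarrow> bool" where
  "is_path E \<mu> \<longleftrightarrow> \<mu> \<noteq> [] \<and> set \<mu> \<subseteq> edges E
     \<and> (\<forall>i. Suc i < length \<mu> \<longrightarrow> rng E (\<mu> ! i) = src E (\<mu> ! Suc i))"

definition path_src :: "('v, 'e) dgraph \<Rightarrow> 'e list \<Rightarrow> 'v" where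
  "path_src E \<mu> = src E (hd \<mu>)"

definition path_rng :: "('v, 'e) dgraph \<Rightarrow> 'e list \<Rightarrow> 'v" where
  "path_rng E \<mu> = rng E (last \<mu>)"

definition is_return_path :: "('v, 'e) dgraph \<Rightarrow> 'e list \<Rightarrow> bool" where
  "is_return_path E \<mu> \<longleftrightarrow> is_path E \<mu> \<and> path_src E \<mu> = path_rng E \<mu>
     \<and> (\<forall>i. Suc i < length \<mu> \<longrightarrow> rng E (\<mu> ! i) \<noteq> path_rng E \<mu>)"

definition supports :: "('v, 'e) dgraph \<Rightarrow> 'v \<Rightarrow> 'e list \<Rightarrow> bool" where
  "supports E w \<mu> \<longleftrightarrow> is_return_path E \<mu> \<and> path_src E \<mu> = w"

definition condition_K :: "('v, 'e) dgraph \<Rightarrow> bool" where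
  "condition_K E \<longleftrightarrow> (\<forall>w \<in> verts E. \<not> (\<exists>!\<mu>. supports E w \<mu>))"

datatype cs_vert = U1 | U2
datatype cs_edge = F1 | F2 | H1 | H2 | K1 | K2

definition cuntz_splice :: "('v, 'e) dgraph \<Rightarrow> 'v \<Rightarrow> ('v + cs_vert, 'e + cs_edge) dgraph" where
  "cuntz_splice E v = \<lparr>
     verts = Inl ` verts E \<union> {Inr U1, Inr U2},
     edges = Inl ` edges E \<union> Inr ` {F1, F2, H1, H2, K1, K2},
     rng = (\<lambda>x. case x of Inl e \<Rightarrow> Inl (rng E e)
                | Inr F1 \<Rightarrow> Inr U1 | Inr F2 \<Rightarrow> Inl v
                | Inr H1 \<Rightarrow> Inr U1 | Inr H2 \<Rightarrow> Inr U2
                | Inr K1 \<Rightarrow> Inr U1 | Inr K2 \<Rightarrow> Inr U2),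
     src = (\<lambda>x. case x of Inl e \<Rightarrow> Inl (src E e)
                | Inr F1 \<Rightarrow> Inl v | Inr F2 \<Rightarrow> Inr U1
                | Inr H1 \<Rightarrow> Inr U1 | Inr H2 \<Rightarrow> Inr U1
                | Inr K1 \<Rightarrow> Inr U2 | Inr K2 \<Rightarrow> Inr U2) \<rparr>"

end

theory Submission
  imports Defs
begin

lemma butlast_iff:
  "(\<forall>i. Suc i < length \<mu> \<longrightarrow> P (\<mu> ! i)) \<longleftrightarrow> (\<forall>e\<in>set (butlast \<mu>). P e)"
proof
  assume H: "\<forall>i. Suc i < length \<mu> \<longrightarrow> P (\<mu> ! i)"
  show "\<forall>e\<in>set (butlast \<mu>). P e"
  proof
    fix e assume "e \<in> set (butlast \<mu>)"
    then obtain i where "i < length (butlast \<mu>)" "e = butlast \<mu> ! i" by (auto simp: in_set_conv_nth)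
    thus "P e" using H by (simp add: nth_butlast)
  qed
next
  assume H: "\<forall>e\<in>set (butlast \<mu>). P e"
  show "\<forall>i. Suc i < length \<mu> \<longrightarrow> P (\<mu> ! i)"
  proof (intro allI impI)
    fix i assume "Suc i < length \<mu>"
    hence l: "i < length (butlast \<mu>)" by simp
    hence "butlast \<mu> ! i \<in> set (butlast \<mu>)" "butlast \<mu> ! i = \<mu> ! i"
      using nth_mem[OF l] nth_butlast[OF l] by auto
    thus "P (\<mu> ! i)" using H by metis
  qed
qed

lemma supports_alt:
  "supports G w \<mu> \<longleftrightarrow> \<mu> \<noteq> [] \<and> set \<mu> \<subseteq> edges G \<and> successively (\<lambda>a b. rng G a = src G b) \<mu>
     \<and> src G (hd \<mu>) = w \<and> rng G (last \<mu>) = w \<and> (\<forall>e\<in>set (butlast \<mu>). rng G e \<noteq> w)"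
  unfolding supports_def is_return_path_def is_path_def path_src_def path_rng_def
    successively_conv_nth butlast_iff[symmetric] by auto

lemma cs_rng_Inl[simp]: "rng (cuntz_splice E v) (Inl e) = Inl (rng E e)"
  and cs_src_Inl[simp]: "src (cuntz_splice E v) (Inl e) = Inl (src E e)"
  and cs_edges_Inl[simp]: "(Inl e \<in> edges (cuntz_splice E v)) = (e \<in> edges E)"
  and cs_edges_Inr[simp]: "Inr k \<in> edges (cuntz_splice E v)"
  by (auto simp: cuntz_splice_def; cases k; simp)+

lemma cs_verts: "verts (cuntz_splice E v) = Inl ` verts E \<union> {Inr U1, Inr U2}"
  by (simp add: cuntz_splice_def)

lemma cs_rs_Inr[simp]:
  "rng (cuntz_splice E v) (Inr F1) = Inr U1" "src (cuntz_splice E v) (Inr F1) = Inl v"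
  "rng (cuntz_splice E v) (Inr F2) = Inl v" "src (cuntz_splice E v) (Inr F2) = Inr U1"
  "rng (cuntz_splice E v) (Inr H1) = Inr U1" "src (cuntz_splice E v) (Inr H1) = Inr U1"
  "rng (cuntz_splice E v) (Inr H2) = Inr U2" "src (cuntz_splice E v) (Inr H2) = Inr U1"
  "rng (cuntz_splice E v) (Inr K1) = Inr U1" "src (cuntz_splice E v) (Inr K1) = Inr U2"
  "rng (cuntz_splice E v) (Inr K2) = Inr U2" "src (cuntz_splice E v) (Inr K2) = Inr U2"
  by (simp_all add: cuntz_splice_def)

definition lp :: "cs_vert \<Rightarrow> cs_edge" where "lp c = (case c of U1 \<Rightarrow> H1 | U2 \<Rightarrow> K2)"

lemma lp_rs[simp]: "rng (cuntz_splice E v) (Inr (lp c)) = Inr c" "src (cuntz_splice E v) (Inr (lp c)) = Inr c"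
  by (cases c; simp add: lp_def)+

lemma insert_loop:
  assumes S: "supports (cuntz_splice E v) (Inl x) (xs @ ys)"
    and ne: "xs \<noteq> []" and r: "rng (cuntz_splice E v) (last xs) = Inr c"
  shows "supports (cuntz_splice E v) (Inl x) (xs @ Inr (lp c) # ys)"
proof -
  let ?F = "cuntz_splice E v"
  from S have A: "set (xs @ ys) \<subseteq> edges ?F" "successively (\<lambda>a b. rng ?F a = src ?F b) (xs @ ys)"
    "src ?F (hd (xs @ ys)) = Inl x" "rng ?F (last (xs @ ys)) = Inl x"
    "\<forall>e\<in>set (butlast (xs @ ys)). rng ?F e \<noteq> Inl x"
    by (auto simp: supports_alt)
  have ysne: "ys \<noteq> []" using A(4) r ne by auto
  have sx: "successively (\<lambda>a b. rng ?F a = src ?F b) xs" and sy: "successively (\<lambda>a b. rng ?F a = src ?F b) ys"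
    and j: "rng ?F (last xs) = src ?F (hd ys)"
    using A(2) ne ysne by (auto simp: successively_append_iff)
  have bl: "butlast (xs @ Inr (lp c) # ys) = xs @ Inr (lp c) # butlast ys"
    using ysne by (simp add: butlast_append)
  have bl2: "butlast (xs @ ys) = xs @ butlast ys" using ysne by (simp add: butlast_append)
  show ?thesis unfolding supports_alt
    using A ne ysne sx sy j r bl bl2
    by (auto simp: successively_append_iff successively_Cons)
qed

lemma supports_map:
  "supports (cuntz_splice E v) (Inl x) (map Inl \<mu>) \<longleftrightarrow> supports E x \<mu>"
  unfolding supports_alt
  by (cases "\<mu> = []") (auto simp: successively_map hd_map last_map map_butlast[symmetric])

lemma sup_U1a: "supports (cuntz_splice E v) (Inr U1) [Inr H1]"
  unfolding supports_alt by (intro conjI) simp_all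

lemma sup_U1b: "supports (cuntz_splice E v) (Inr U1) [Inr H2, Inr K1]"
  unfolding supports_alt by (intro conjI) simp_all

lemma sup_U2a: "supports (cuntz_splice E v) (Inr U2) [Inr K2]"
  unfolding supports_alt by (intro conjI) simp_all

lemma sup_U2b: "supports (cuntz_splice E v) (Inr U2) [Inr K1, Inr H2]"
  unfolding supports_alt by (intro conjI) simp_all

lemma two_gen: "supports G w a \<Longrightarrow> supports G w b \<Longrightarrow> a \<noteq> b \<Longrightarrow>
   \<forall>\<mu>. supports G w \<mu> \<longrightarrow> (\<exists>\<nu>. \<nu> \<noteq> \<mu> \<and> supports G w \<nu>)"
  by metis

theorem proposition2p3:
  fixes E :: "('v, 'e) dgraph" and v :: 'v
  assumes "is_graph E"
    and "condition_K E"
    and "v \<in> verts E"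
    and "\<exists>\<mu> \<nu>. \<mu> \<noteq> \<nu> \<and> supports E v \<mu> \<and> supports E v \<nu>"
  shows "condition_K (cuntz_splice E v)"
  unfolding condition_K_def
proof
  let ?F = "cuntz_splice E v"
  fix w assume w: "w \<in> verts ?F"
  have two: "\<forall>\<mu>. supports ?F w \<mu> \<longrightarrow> (\<exists>\<nu>. \<nu> \<noteq> \<mu> \<and> supports ?F w \<nu>)"
  proof (cases w)
    case (Inr c)
    show ?thesis
    proof (cases c)
      case U1
      have "supports ?F w [Inr H1]" "supports ?F w [Inr H2, Inr K1]"
        unfolding Inr U1 by (rule sup_U1a, rule sup_U1b)
      thus ?thesis by (rule two_gen) simp
    next
      case U2
      have "supports ?F w [Inr K2]" "supports ?F w [Inr K1, Inr H2]"
        unfolding Inr U2 by (rule sup_U2a, rule sup_U2b)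
      thus ?thesis by (rule two_gen) simp
    qed
  next
    case (Inl x)
    have xv: "x \<in> verts E" using w Inl by (auto simp: cs_verts)
    show ?thesis
    proof (intro allI impI)
      fix \<mu> assume S: "supports ?F w \<mu>"
      show "\<exists>\<nu>. \<nu> \<noteq> \<mu> \<and> supports ?F w \<nu>"
      proof (cases "\<exists>k. Inr k \<in> set \<mu>")
        case True
        have "\<exists>xs ys c. \<mu> = xs @ ys \<and> xs \<noteq> [] \<and> rng ?F (last xs) = Inr c"
        proof -
          from True obtain k where k: "Inr k \<in> set \<mu>" by blast
          then obtain as bs where sp: "\<mu> = as @ Inr k # bs" by (meson split_list)
          show ?thesis
          proof (cases "k = F2")
            case False
            then obtain c where "rng ?F (Inr k) = Inr c" by (cases k) auto
            thus ?thesis using sp by (intro exI[of _ "as @ [Inr k]"] exI[of _ bs] exI[of _ c]) simp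
          next
            case True
            have ane: "as \<noteq> []"
            proof
              assume "as = []"
              thus False using S Inl sp True by (auto simp: supports_alt)
            qed
            have "successively (\<lambda>a b. rng ?F a = src ?F b) \<mu>" using S by (simp add: supports_alt)
            hence "rng ?F (last as) = Inr U1" using sp ane True
              by (auto simp: successively_append_iff successively_Cons)
            thus ?thesis using sp ane by (intro exI[of _ as] exI[of _ "Inr k # bs"] exI[of _ U1]) simp
          qed
        qed
        then obtain xs ys c where sp: "\<mu> = xs @ ys" "xs \<noteq> []" "rng ?F (last xs) = Inr c" by blast
        have "supports ?F w (xs @ Inr (lp c) # ys)"
          using insert_loop[of E v x xs ys c] S sp Inl by simp
        moreover have "xs @ Inr (lp c) # ys \<noteq> \<mu>"
          using sp by (auto dest: arg_cong[of _ _ length])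
        ultimately show ?thesis by blast
      next
        case False
        define \<mu>0 where "\<mu>0 = map projl \<mu>"
        have m: "\<mu> = map Inl \<mu>0" unfolding \<mu>0_def
        proof -
          have "\<forall>e\<in>set \<mu>. Inl (projl e) = e"
          proof
            fix e assume "e \<in> set \<mu>" hence "\<not> (\<exists>k. e = Inr k)" using False by blast
            thus "Inl (projl e) = e" by (cases e) auto
          qed
          hence "map (Inl \<circ> projl) \<mu> = \<mu>" by (simp add: map_idI)
          thus "\<mu> = map Inl (map projl \<mu>)" by simp
        qed
        have S0: "supports E x \<mu>0" using S unfolding m Inl supports_map .
        from assms(2) xv have "\<not> (\<exists>!\<mu>. supports E x \<mu>)" by (simp add: condition_K_def)
        then obtain \<nu>0 where n1: "\<nu>0 \<noteq> \<mu>0" and n2: "supports E x \<nu>0"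
        proof -
          assume r: "\<And>\<nu>0. \<nu>0 \<noteq> \<mu>0 \<Longrightarrow> supports E x \<nu>0 \<Longrightarrow> thesis"
          assume nu: "\<not> (\<exists>!\<mu>. supports E x \<mu>)"
          show thesis
          proof (rule ccontr)
            assume "\<not> thesis"
            note nt = this
            have all: "\<nu>0 = \<mu>0" if sx: "supports E x \<nu>0" for \<nu>0
            proof (rule ccontr)
              assume "\<nu>0 \<noteq> \<mu>0"
              from r[OF this sx] show False using nt by contradiction
            qed
            have "\<exists>!\<mu>. supports E x \<mu>"
            proof (rule ex1I[of _ \<mu>0])
              show "supports E x \<mu>0" by (rule S0)
            next
              fix y assume "supports E x y" thus "y = \<mu>0" by (rule all)
            qed
            thus False using nu by contradiction
          qed
        qed
        have "map Inl \<nu>0 \<noteq> \<mu>"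
        proof
          assume "map Inl \<nu>0 = \<mu>"
          hence "map Inl \<nu>0 = map Inl \<mu>0" using m by simp
          hence "\<nu>0 = \<mu>0" by (simp add: inj_map_eq_map)
          thus False using n1 by contradiction
        qed
        moreover have "supports ?F w (map Inl \<nu>0)" unfolding Inl supports_map by (rule n2)
        ultimately show ?thesis by blast
      qed
    qed
  qed
  show "\<not> (\<exists>!\<mu>. supports ?F w \<mu>)"
  proof
    assume "\<exists>!\<mu>. supports ?F w \<mu>"
    then obtain \<mu> where m: "supports ?F w \<mu>" and u: "\<And>\<nu>. supports ?F w \<nu> \<Longrightarrow> \<nu> = \<mu>" by auto
    from two m obtain \<nu> where "\<nu> \<noteq> \<mu>" "supports ?F w \<nu>" by blast
    thus False using u by blast
  qed
qed

end
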